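(* Let $(X,d)$ and $(\Lambda,d_\Lambda)$ be compact metric spaces and $\tau:\Lambda\times X\to X$ continuous. For each $n\in\mathbb N$ let $q^{(n)}:X\to\mathcal P(\Lambda)$ be continuous, and suppose that there are constants $s>0$, $r\ge0$, $t\ge 0$ with $s+rt<1$ such that for every $n$: (M1) $\int_\Lambda |f(\tau(\lambda,x))-f(\tau(\lambda,y))|\,dq^{(n)}_x(\lambda)\le s\,d(x,y)$ for all $x,y\in X$ and all $f\in\mathrm{Lip}_1(X)$; (H2) $d(\tau(\lambda_1,x),\tau(\lambda_2,x))\le r\,d_\Lambda(\lambda_1,\lambda_2)$ for all $\lambda_1,\lambda_2\in\Lambda$, $x\in X$; (H3) $d_{MK}(q^{(n)}_x,q^{(n)}_y)\le t\,d(x,y)$ for all $x,y\in X$. Let $\mu^{(n)}$ be the unique $T_{q^{(n)}}$-invariant probability. Assume that there is a family $q^*=(q^*_x)_{x\in X}\subseteq\mathcal P(\Lambda)$ such that $q^{(n)}_x\to q^*_x$ in $d_{MK}$ uniformly in $x\in X$ (for every $\varepsilon>0$ there is $N$ with $d_{MK}(q^{(n)}_x,q^*_x)<\varepsilon$ for all $n\ge N$ and all $x\in X$). Then there exists a unique probability $\mu^*\in\mathcal P(X)$ invariant for the IFS with measures $(X,\tau,q^* )$, i.e. $T_{q^*}(\mu^* )=\mu^*$, and $\mu^{(n)}\to\mu^*$ in $d_{MK}$ on $\mathcal P(X)$.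
   Context: $\mathcal{P}(Y)$ is the set of Borel probability measures on a compact metric space $Y$, with $d_{MK}(\mu,\nu)=\sup_{f\in \mathrm{Lip}_1(Y)}\{\int f\,d\mu-\int f\,d\nu\}$, $\mathrm{Lip}_1(Y)$ being the real $1$-Lipschitz functions on $Y$. For a family $p=(p_x)_{x\in X}\subseteq\mathcal P(\Lambda)$, the transfer operator is $B_p(f)(x)=\int_\Lambda f(\tau(\lambda,x))\,dp_x(\lambda)$ and the Markov operator $T_p$ on $\mathcal P(X)$ is defined by $\int f\,dT_p(\mu)=\int B_p(f)\,d\mu$ for $f\in C(X)$; $\mu$ is invariant if $T_p(\mu)=\mu$. *)

theory Defs
  imports "HOL-Probability.Probability"
begin

definition lip1 :: "('a::metric_space \<Rightarrow> real) \<Rightarrow> bool" where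
  "lip1 f \<longleftrightarrow> (\<forall>x y. \<bar>f x - f y\<bar> \<le> dist x y)"

definition probs :: "'a::topological_space measure set" where
  "probs = {M. prob_space M \<and> sets M = sets borel}"

definition dMK :: "'a::metric_space measure \<Rightarrow> 'a measure \<Rightarrow> real" where
  "dMK \<mu> \<nu> = (SUP f\<in>{f. lip1 f}. (\<integral>x. f x \<partial>\<mu>) - (\<integral>x. f x \<partial>\<nu>))"

definition transfer :: "('l \<Rightarrow> 'x \<Rightarrow> 'x) \<Rightarrow> ('x \<Rightarrow> 'l measure) \<Rightarrow> ('x \<Rightarrow> real) \<Rightarrow> 'x \<Rightarrow> real" where
  "transfer \<tau> p f x = (\<integral>l. f (\<tau> l x) \<partial>(p x))"

text \<open>mu is invariant for the Markov operator T_p: mu is a probability and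
  int f d(T_p mu) = int B_p f d mu equals int f d mu for all continuous f,
  i.e. T_p(mu) = mu.\<close>
definition invariant :: "('l \<Rightarrow> 'x::topological_space \<Rightarrow> 'x) \<Rightarrow> ('x \<Rightarrow> 'l measure) \<Rightarrow> 'x measure \<Rightarrow> bool" where
  "invariant \<tau> p \<mu> \<longleftrightarrow> \<mu> \<in> probs \<and>
     (\<forall>f::'x \<Rightarrow> real. continuous_on UNIV f \<longrightarrow> (\<integral>x. f x \<partial>\<mu>) = (\<integral>x. transfer \<tau> p f x \<partial>\<mu>))"

definition weak_continuous :: "('x::topological_space \<Rightarrow> 'l::topological_space measure) \<Rightarrow> bool" where
  "weak_continuous q \<longleftrightarrow> (\<forall>f::'l \<Rightarrow> real. continuous_on UNIV f \<longrightarrow>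
      continuous_on UNIV (\<lambda>x. \<integral>l. f l \<partial>(q x)))"

end

theory Submission
  imports Defs
begin

definition lipc :: "real \<Rightarrow> ('a::metric_space \<Rightarrow> real) \<Rightarrow> bool" where
  "lipc c f \<longleftrightarrow> (\<forall>x y. \<bar>f x - f y\<bar> \<le> c * dist x y)"

lemma lip1_lipc: "lip1 f \<longleftrightarrow> lipc 1 f"
  by (simp add: lip1_def lipc_def)

lemma lipc_cont:
  assumes "lipc c f" shows "continuous_on UNIV f"
proof (rule continuous_on_iff[THEN iffD2], intro ballI allI impI)
  fix x and e :: real assume "e > 0"
  show "\<exists>d>0. \<forall>x'\<in>UNIV. dist x' x < d \<longrightarrow> dist (f x') (f x) < e"
  proof (intro exI[of _ "e / (\<bar>c\<bar> + 1)"] conjI ballI impI)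
    show "e / (\<bar>c\<bar> + 1) > 0" using \<open>e > 0\<close> by simp
    fix x' assume "dist x' x < e / (\<bar>c\<bar> + 1)"
    then have "dist x' x * (\<bar>c\<bar> + 1) < e"
      using pos_less_divide_eq[of "\<bar>c\<bar> + 1" "dist x' x" e] by linarith
    moreover have "\<bar>f x' - f x\<bar> \<le> c * dist x' x" using assms by (simp add: lipc_def)
    moreover have "c * dist x' x \<le> \<bar>c\<bar> * dist x' x"
      by (rule mult_right_mono) auto
    moreover have "\<bar>c\<bar> * dist x' x \<le> dist x' x * (\<bar>c\<bar> + 1)"
      by (simp add: algebra_simps)
    ultimately show "dist (f x') (f x) < e"
      unfolding dist_real_def by linarith
  qed
qed

lemma lip1_cont: "lip1 f \<Longrightarrow> continuous_on UNIV f"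
  using lipc_cont lip1_lipc by blast

lemma cont_bounded:
  fixes f :: "'a::metric_space \<Rightarrow> real"
  assumes "compact (UNIV::'a set)" "continuous_on UNIV f"
  shows "\<exists>B. \<forall>x. \<bar>f x\<bar> \<le> B"
proof -
  have "compact (range f)" using assms compact_continuous_image by blast
  then have "bounded (range f)" by (rule compact_imp_bounded)
  then show ?thesis by (auto simp: bounded_real)
qed

lemma probs_meas:
  assumes "M \<in> probs" "continuous_on UNIV f"
  shows "f \<in> borel_measurable M"
proof -
  have s: "sets M = sets borel" using assms by (simp add: probs_def)
  have "f \<in> borel_measurable borel"
    using assms(2) by (rule borel_measurable_continuous_onI)
  then show ?thesis
    using measurable_cong_sets[OF s refl, where N=borel] by blast
qed

lemma probs_integrable:
  fixes f :: "'a::metric_space \<Rightarrow> real"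
  assumes "compact (UNIV::'a set)" "M \<in> probs" "continuous_on UNIV f"
  shows "integrable M f"
proof -
  obtain B where B: "\<And>x. \<bar>f x\<bar> \<le> B" using cont_bounded[OF assms(1,3)] by blast
  interpret prob_space M using assms(2) unfolding probs_def by blast
  show ?thesis
  proof (rule integrable_const_bound[where B=B])
    show "AE x in M. norm (f x) \<le> B" by (rule AE_I2) (use B in simp)
    show "f \<in> borel_measurable M" by (rule probs_meas[OF assms(2,3)])
  qed
qed

lemma probs_space: "M \<in> probs \<Longrightarrow> space M = UNIV"
  unfolding probs_def using sets_eq_imp_space_eq[of M borel] by simp

lemma probs_const: assumes "M \<in> probs" shows "(\<integral>x. c \<partial>M) = (c::real)"
proof -
  interpret prob_space M using assms by (simp add: probs_def)
  show ?thesis using prob_space by simp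
qed

lemma diam_bound:
  assumes "compact (UNIV::'a::metric_space set)"
  obtains D where "\<And>x y::'a. dist x y \<le> D"
proof -
  have "bounded (UNIV::'a set)" using assms by (rule compact_imp_bounded)
  then obtain e where e: "\<And>x::'a. dist undefined x \<le> e"
    unfolding bounded_any_center[of _ undefined] by blast
  have "dist x y \<le> 2 * e" for x y :: 'a
    using dist_triangle3[of x y undefined] e[of x] e[of y] by linarith
  then show ?thesis using that by blast
qed

lemma lip1_int_bounds:
  assumes cX: "compact (UNIV::'a::metric_space set)" and M: "M \<in> probs" and f: "lip1 (f::'a \<Rightarrow> real)"
    and D: "\<And>x y::'a. dist x y \<le> D"
  shows "(\<integral>x. f x \<partial>M) \<le> f x0 + D" "(\<integral>x. f x \<partial>M) \<ge> f x0 - D"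
proof -
  have int: "integrable M f" using probs_integrable[OF cX M lip1_cont[OF f]] .
  have b: "\<bar>f x - f x0\<bar> \<le> D" for x using f D[of x x0] unfolding lip1_def by (meson order_trans)
  have ic: "integrable M (\<lambda>x. c)" for c :: real
    using probs_integrable[OF cX M continuous_on_const] .
  have b1: "f x \<le> f x0 + D" "f x0 - D \<le> f x" for x using b[of x] by (auto simp: abs_le_iff)
  have "(\<integral>x. f x \<partial>M) \<le> (\<integral>x. f x0 + D \<partial>M)"
    by (rule integral_mono[OF int ic]) (rule b1)
  then show "(\<integral>x. f x \<partial>M) \<le> f x0 + D" using probs_const[OF M, of "f x0 + D"] by linarith
  have "(\<integral>x. f x0 - D \<partial>M) \<le> (\<integral>x. f x \<partial>M)"
    by (rule integral_mono[OF ic int]) (rule b1)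
  then show "(\<integral>x. f x \<partial>M) \<ge> f x0 - D" using probs_const[OF M, of "f x0 - D"] by linarith
qed

lemma dMK_bdd:
  assumes cX: "compact (UNIV::'a::metric_space set)" and M: "\<mu> \<in> probs" "\<nu> \<in> probs"
  shows "bdd_above ((\<lambda>f. (\<integral>x. f x \<partial>\<mu>) - (\<integral>x. f x \<partial>\<nu>)) ` {f::'a\<Rightarrow>real. lip1 f})"
proof -
  obtain D where D: "\<And>x y::'a. dist x y \<le> D" using diam_bound[OF cX] by blast
  show ?thesis
  proof (rule bdd_aboveI2[where M="2*D"])
    fix f :: "'a \<Rightarrow> real" assume "f \<in> {f. lip1 f}"
    then have f: "lip1 f" by simp
    show "(\<integral>x. f x \<partial>\<mu>) - (\<integral>x. f x \<partial>\<nu>) \<le> 2 * D"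
      using lip1_int_bounds[OF cX M(1) f D, of undefined] lip1_int_bounds[OF cX M(2) f D, of undefined]
      by linarith
  qed
qed

lemma dMK_ge:
  assumes cX: "compact (UNIV::'a::metric_space set)" and M: "\<mu> \<in> probs" "\<nu> \<in> probs"
    and f: "lip1 (f::'a \<Rightarrow> real)"
  shows "(\<integral>x. f x \<partial>\<mu>) - (\<integral>x. f x \<partial>\<nu>) \<le> dMK \<mu> \<nu>"
  unfolding dMK_def by (rule cSUP_upper[OF _ dMK_bdd[OF cX M]]) (use f in simp)

lemma lip1_const: "lip1 (\<lambda>x. c)"
  by (simp add: lip1_def)

lemma dMK_le:
  assumes "\<And>f. lip1 (f::'a::metric_space \<Rightarrow> real) \<Longrightarrow> (\<integral>x. f x \<partial>\<mu>) - (\<integral>x. f x \<partial>\<nu>) \<le> C"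
  shows "dMK \<mu> \<nu> \<le> C"
  unfolding dMK_def
proof (rule cSUP_least)
  show "{f::'a \<Rightarrow> real. lip1 f} \<noteq> {}" using lip1_const by blast
qed (use assms in auto)

lemma dMK_nonneg:
  assumes cX: "compact (UNIV::'a::metric_space set)" and M: "\<mu> \<in> probs" "\<nu> \<in> probs"
  shows "0 \<le> dMK \<mu> (\<nu>::'a measure)"
  using dMK_ge[OF cX M lip1_const[of 0]] by simp

lemma lipc_div:
  assumes "lipc k g" "k > 0"
  shows "lip1 (\<lambda>x. g x / k)"
  unfolding lip1_def
proof (intro allI)
  fix x y
  have "\<bar>g x - g y\<bar> \<le> k * dist x y" using assms by (simp add: lipc_def)
  then have "\<bar>g x - g y\<bar> / k \<le> dist x y" using assms(2) by (simp add: divide_le_eq mult.commute)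
  moreover have "\<bar>g x / k - g y / k\<bar> = \<bar>g x - g y\<bar> / k" using assms(2)
    by (simp add: diff_divide_distrib[symmetric])
  ultimately show "\<bar>g x / k - g y / k\<bar> \<le> dist x y" by simp
qed

lemma lipc0_const:
  assumes "lipc 0 g" shows "g = (\<lambda>_. g undefined)"
  using assms by (auto simp: lipc_def)

lemma dMK_lipc:
  assumes cX: "compact (UNIV::'a::metric_space set)" and M: "\<mu> \<in> probs" "\<nu> \<in> probs"
    and g: "lipc k (g::'a \<Rightarrow> real)" and k: "k \<ge> 0"
  shows "\<bar>(\<integral>x. g x \<partial>\<mu>) - (\<integral>x. g x \<partial>\<nu>)\<bar> \<le> k * dMK \<mu> \<nu>"
proof (cases "k = 0")
  case True
  then have "g = (\<lambda>_. g undefined)" using lipc0_const g by blast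
  then have "(\<integral>x. g x \<partial>\<mu>) = (\<integral>x. g x \<partial>\<nu>)"
    using probs_const[OF M(1)] probs_const[OF M(2)] by metis
  then show ?thesis using True by simp
next
  case False
  then have kp: "k > 0" using k by simp
  define h where "h x = g x / k" for x
  have h: "lip1 h" unfolding h_def by (rule lipc_div[OF g kp])
  have hm: "lip1 (\<lambda>x. - h x)" using h by (simp add: lip1_def abs_minus_commute)
  have eq: "(\<integral>x. g x \<partial>M) = k * (\<integral>x. h x \<partial>M)" for M
    using kp by (simp add: h_def)
  have 1: "(\<integral>x. h x \<partial>\<mu>) - (\<integral>x. h x \<partial>\<nu>) \<le> dMK \<mu> \<nu>" by (rule dMK_ge[OF cX M h])
  have 2: "(\<integral>x. - h x \<partial>\<mu>) - (\<integral>x. - h x \<partial>\<nu>) \<le> dMK \<mu> \<nu>" by (rule dMK_ge[OF cX M hm])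
  then have "\<bar>(\<integral>x. h x \<partial>\<mu>) - (\<integral>x. h x \<partial>\<nu>)\<bar> \<le> dMK \<mu> \<nu>" using 1 by simp
  then have "k * \<bar>(\<integral>x. h x \<partial>\<mu>) - (\<integral>x. h x \<partial>\<nu>)\<bar> \<le> k * dMK \<mu> \<nu>"
    using kp by simp
  moreover have "\<bar>(\<integral>x. g x \<partial>\<mu>) - (\<integral>x. g x \<partial>\<nu>)\<bar> = k * \<bar>(\<integral>x. h x \<partial>\<mu>) - (\<integral>x. h x \<partial>\<nu>)\<bar>"
    using kp by (simp add: eq abs_mult right_diff_distrib[symmetric])
  ultimately show ?thesis by simp
qed

lemma infdist_lip: "\<bar>infdist x F - infdist y F\<bar> \<le> dist x y"
  using infdist_triangle[of x F y] infdist_triangle[of y F x] by (simp add: dist_commute abs_le_iff)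

lemma max0_lip: "\<bar>max 0 (a::real) - max 0 b\<bar> \<le> \<bar>a - b\<bar>"
  by (simp add: max_def abs_le_iff) linarith

lemma probs_sets: "M \<in> probs \<Longrightarrow> sets M = sets borel"
  by (simp add: probs_def)

lemma probs_eqI_lip:
  assumes cX: "compact (UNIV::'a::metric_space set)" and M: "\<mu> \<in> probs" "\<nu> \<in> probs"
    and eq: "\<And>f::'a \<Rightarrow> real. lip1 f \<Longrightarrow> (\<integral>x. f x \<partial>\<mu>) = (\<integral>x. f x \<partial>\<nu>)"
  shows "\<mu> = \<nu>"
proof -
  interpret m: prob_space \<mu> using M by (simp add: probs_def)
  interpret n: prob_space \<nu> using M by (simp add: probs_def)
  have lipeq: "(\<integral>x. g x \<partial>\<mu>) = (\<integral>x. g x \<partial>\<nu>)" if g: "lipc k (g::'a\<Rightarrow>real)" and k: "k > 0" for g k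
  proof -
    have "(\<integral>x. g x / k \<partial>\<mu>) = (\<integral>x. g x / k \<partial>\<nu>)" by (rule eq[OF lipc_div[OF g k]])
    then show ?thesis using k by simp
  qed
  have closed_eq: "measure \<mu> F = measure \<nu> F" if F: "closed F" for F :: "'a set"
  proof (cases "F = {}")
    case True then show ?thesis by simp
  next
    case False
    define h where "h j x = max 0 (1 - real (Suc j) * infdist x F)" for j x
    have hl: "lipc (real (Suc j)) (h j)" for j
      unfolding lipc_def
    proof (intro allI)
      fix x y
      have "\<bar>h j x - h j y\<bar> \<le> \<bar>(1 - real (Suc j) * infdist x F) - (1 - real (Suc j) * infdist y F)\<bar>"
        unfolding h_def by (rule max0_lip)
      also have "\<dots> = real (Suc j) * \<bar>infdist x F - infdist y F\<bar>"
        by (simp add: right_diff_distrib[symmetric] abs_mult abs_minus_commute)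
      also have "\<dots> \<le> real (Suc j) * dist x y"
        by (rule mult_left_mono[OF infdist_lip]) simp
      finally show "\<bar>h j x - h j y\<bar> \<le> real (Suc j) * dist x y" .
    qed
    have hc: "continuous_on UNIV (h j)" for j by (rule lipc_cont[OF hl])
    have hb: "norm (h j x) \<le> 1" for j x
      unfolding h_def using infdist_nonneg[of x F] by auto
    have lim: "(\<lambda>j. h j x) \<longlonglongrightarrow> indicator F x" for x
    proof (cases "x \<in> F")
      case True
      then show ?thesis by (simp add: h_def)
    next
      case nF: False
      have pos: "infdist x F > 0" using infdist_pos_not_in_closed[OF F False nF] .
      obtain N :: nat where N: "1 / infdist x F < real N" using reals_Archimedean2 by blast
      have "eventually (\<lambda>j. h j x = 0) sequentially"
      proof (rule eventually_sequentiallyI[of N])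
        fix j assume "N \<le> j"
        then have "1 / infdist x F < real (Suc j)" using N by simp
        then have "1 < real (Suc j) * infdist x F" using pos by (simp add: divide_less_eq)
        then show "h j x = 0" by (simp add: h_def)
      qed
      then show ?thesis using nF by (simp add: tendsto_eventually)
    qed
    have Fs: "F \<in> sets borel" using F by simp
    have conv: "(\<lambda>j. \<integral>x. h j x \<partial>M) \<longlonglongrightarrow> measure M F" if MM: "M \<in> probs" for M
    proof -
      interpret p: prob_space M using MM by (simp add: probs_def)
      have FM: "F \<in> sets M" using Fs probs_sets[OF MM] by simp
      have "(\<lambda>j. \<integral>x. h j x \<partial>M) \<longlonglongrightarrow> (\<integral>x. indicator F x \<partial>M)"
      proof (rule integral_dominated_convergence[where w="\<lambda>_. 1"])
        show "indicator F \<in> borel_measurable M" using FM by simp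
        show "h j \<in> borel_measurable M" for j using probs_meas[OF MM hc] .
        show "integrable M (\<lambda>_. 1::real)" by simp
        show "AE x in M. (\<lambda>j. h j x) \<longlonglongrightarrow> indicator F x" using lim by simp
        show "AE x in M. norm (h j x) \<le> 1" for j using hb by simp
      qed
      then show ?thesis using FM by simp
    qed
    have e: "(\<lambda>j. \<integral>x. h j x \<partial>\<mu>) = (\<lambda>j. \<integral>x. h j x \<partial>\<nu>)"
      by (rule ext, rule lipeq[OF hl]) simp
    have "(\<lambda>j. \<integral>x. h j x \<partial>\<mu>) \<longlonglongrightarrow> measure \<nu> F" unfolding e by (rule conv[OF M(2)])
    then show ?thesis by (rule LIMSEQ_unique[OF conv[OF M(1)]])
  qed
  show ?thesis
  proof (rule measure_eqI_generator_eq[where E="Collect closed" and \<Omega>=UNIV and A="\<lambda>_. UNIV"])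
    show "Int_stable (Collect closed)" by (auto simp: Int_stable_def)
    show "Collect closed \<subseteq> Pow UNIV" by simp
    show "emeasure \<mu> X = emeasure \<nu> X" if "X \<in> Collect closed" for X
      using closed_eq[of X] that m.emeasure_eq_measure n.emeasure_eq_measure by simp
    have "sets (borel::'a measure) = sigma_sets UNIV (Collect closed)"
      by (subst borel_eq_closed) (simp add: sets_measure_of)
    then show "sets \<mu> = sigma_sets UNIV (Collect closed)" "sets \<nu> = sigma_sets UNIV (Collect closed)"
      using probs_sets M by auto
    show "range (\<lambda>_. UNIV) \<subseteq> Collect closed" by auto
    show "(\<Union>i::nat. UNIV) = (UNIV::'a set)" by simp
    show "emeasure \<mu> UNIV \<noteq> \<infinity>" for i :: nat by simp
  qed
qed

lemma lip_approx:
  assumes cX: "compact (UNIV::'a::metric_space set)" and f: "continuous_on UNIV (f::'a \<Rightarrow> real)"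
    and e: "e > 0"
  shows "\<exists>k g. k \<ge> 0 \<and> lipc k g \<and> (\<forall>x. \<bar>f x - g x\<bar> \<le> e)"
proof -
  obtain B0 where B0: "\<And>x. \<bar>f x\<bar> \<le> B0" using cont_bounded[OF cX f] by blast
  define B where "B = max B0 0"
  have B: "\<bar>f x\<bar> \<le> B" "B \<ge> 0" for x using B0[of x] by (auto simp: B_def)
  have "uniformly_continuous_on UNIV f" by (rule compact_uniformly_continuous[OF f cX])
  then obtain d where d: "d > 0" and dd: "\<And>x y. dist y x < d \<Longrightarrow> dist (f y) (f x) < e"
    unfolding uniformly_continuous_on_def using e by blast
  define k where "k = 2 * B / d"
  have k: "k \<ge> 0" using B d by (simp add: k_def)
  have kd: "k * d = 2 * B" using d by (simp add: k_def)
  define g where "g x = (INF y. f y + k * dist x y)" for x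
  have bdd: "bdd_below (range (\<lambda>y. f y + k * dist x y))" for x
  proof (rule bdd_belowI2[where m="-B"])
    fix y show "- B \<le> f y + k * dist x y" using B(1)[of y] k by (simp add: abs_le_iff) (smt (verit) mult_nonneg_nonneg zero_le_dist)
  qed
  have g_le: "g x \<le> f y + k * dist x y" for x y
    unfolding g_def by (rule cINF_lower[OF bdd]) simp
  have g_ge: "c \<le> g x" if "\<And>y. c \<le> f y + k * dist x y" for c x
    unfolding g_def by (rule cINF_greatest) (use that in auto)
  have lip: "lipc k g"
    unfolding lipc_def
  proof (intro allI)
    fix x y
    have 1: "g x - k * dist x y \<le> g y" for x y
    proof (rule g_ge)
      fix z
      have "g x \<le> f z + k * dist x z" by (rule g_le)
      also have "\<dots> \<le> f z + k * dist y z + k * dist x y"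
        using dist_triangle[of x z y] k by (simp add: algebra_simps) (metis distrib_left mult_left_mono)
      finally show "g x - k * dist x y \<le> f z + k * dist y z" by simp
    qed
    show "\<bar>g x - g y\<bar> \<le> k * dist x y"
      using 1[of x y] 1[of y x] by (simp add: dist_commute abs_le_iff)
  qed
  have approx: "\<bar>f x - g x\<bar> \<le> e" for x
  proof -
    have "g x \<le> f x" using g_le[of x x] by simp
    moreover have "f x - e \<le> g x"
    proof (rule g_ge)
      fix y
      show "f x - e \<le> f y + k * dist x y"
      proof (cases "dist y x < d")
        case True
        then have "\<bar>f y - f x\<bar> < e" using dd[of y x] by (simp add: dist_real_def)
        moreover have "0 \<le> k * dist x y" using k by simp
        ultimately show ?thesis by (simp add: abs_less_iff)
      next
        case False
        then have "k * d \<le> k * dist x y" using k by (simp add: mult_left_mono dist_commute)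
        then have "2 * B \<le> k * dist x y" using kd by simp
        moreover have "\<bar>f x\<bar> \<le> B" "\<bar>f y\<bar> \<le> B" using B by auto
        ultimately show ?thesis using e by (simp add: abs_le_iff)
      qed
    qed
    ultimately show ?thesis using e by (simp add: abs_le_iff)
  qed
  show ?thesis using k lip approx by blast
qed

lemma nets_exist:
  assumes cX: "compact (UNIV::'a::metric_space set)"
  shows "\<exists>P::nat \<Rightarrow> 'a list. \<forall>k. P k \<noteq> [] \<and> (\<forall>x. \<exists>i<length (P k). dist x (P k ! i) < (1/2)^k)"
proof -
  have tb: "\<forall>e>0. \<exists>K. finite K \<and> K \<subseteq> UNIV \<and> (UNIV::'a set) \<subseteq> (\<Union>x\<in>K. ball x e)"
    by (rule seq_compact_imp_totally_bounded[OF compact_imp_seq_compact[OF cX]])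
  have "\<exists>L::'a list. L \<noteq> [] \<and> (\<forall>x. \<exists>i<length L. dist x (L ! i) < (1/2)^k)" for k :: nat
  proof -
    obtain K where K: "finite K" "(UNIV::'a set) \<subseteq> (\<Union>x\<in>K. ball x ((1/2)^k))"
      using tb[rule_format, of "(1/2)^k"] by auto
    obtain L where L: "set L = K" using finite_list[OF K(1)] by blast
    have "\<exists>i<length L. dist x (L ! i) < (1/2)^k" for x
    proof -
      obtain p where "p \<in> K" "x \<in> ball p ((1/2)^k)" using K(2) by blast
      then obtain i where "i < length L" "L ! i = p" using L by (metis in_set_conv_nth)
      then show ?thesis using \<open>x \<in> ball p _\<close> by (auto simp: dist_commute)
    qed
    moreover then have "L \<noteq> []" by fastforce
    ultimately show ?thesis by blast
  qed
  then show ?thesis by (intro choice allI) blast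
qed

locale net =
  fixes P :: "nat \<Rightarrow> 'a::metric_space list"
  assumes ne: "\<And>k. P k \<noteq> []"
    and cov: "\<And>k x. \<exists>i<length (P k). dist x (P k ! i) < (1/2)^k"
begin

definition N :: "nat \<Rightarrow> nat" where "N k = length (P k)"
definition w :: "nat \<Rightarrow> real" where "w k = 1 / (\<Prod>j\<le>k. 3 * real (N j))"
definition dig :: "'a \<Rightarrow> nat \<Rightarrow> nat" where
  "dig x k = (LEAST i. i < N k \<and> dist x (P k ! i) < (1/2)^k)"
definition psi :: "'a \<Rightarrow> real" where "psi x = (\<Sum>k. real (dig x k) * w k)"

lemma N_pos: "N k \<ge> 1"
  using ne[of k] by (simp add: N_def Suc_le_eq)

lemma prod_pos: "(\<Prod>j\<le>k. 3 * real (N j)) > 0"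
  using N_pos by (intro prod_pos) (auto intro: order.strict_trans2[of 0 1])

lemma w_pos: "w k > 0"
  using prod_pos[of k] by (simp add: w_def)

lemma w_Suc: "w (Suc k) = w k / (3 * real (N (Suc k)))"
  by (simp add: w_def atMost_Suc mult.commute)

lemma Nw_Suc: "real (N (Suc k)) * w (Suc k) = w k / 3"
  using N_pos[of "Suc k"] by (simp add: w_Suc)

lemma Nw_0: "real (N 0) * w 0 = 1 / 3"
  using N_pos[of 0] by (simp add: w_def)

lemma w_Suc_le: "w (Suc k) \<le> w k / 3"
proof -
  have "w (Suc k) \<le> real (N (Suc k)) * w (Suc k)"
    using N_pos[of "Suc k"] w_pos[of "Suc k"] by (simp add: mult_le_cancel_right1)
  then show ?thesis using Nw_Suc by simp
qed

lemma w_geo: "w (k + m) \<le> w k * (1/3)^m"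
proof (induction m)
  case 0 then show ?case by simp
next
  case (Suc m)
  have "w (k + Suc m) \<le> w (k + m) / 3" using w_Suc_le[of "k+m"] by simp
  also have "\<dots> \<le> w k * (1/3)^m / 3" using Suc by simp
  finally show ?case by simp
qed

lemma w_mono: assumes "j \<le> k" shows "w k \<le> w j"
proof -
  have "w k \<le> w j * (1/3)^(k-j)" using w_geo[of j "k - j"] assms by simp
  also have "\<dots> \<le> w j" by (rule mult_left_le) (use w_pos[of j] in \<open>auto simp: power_le_one\<close>)
  finally show ?thesis .
qed

lemma w0_le: "w 0 \<le> 1/3"
proof -
  have "w 0 \<le> real (N 0) * w 0"
    using N_pos[of 0] w_pos[of 0] by (simp add: mult_le_cancel_right1)
  then show ?thesis using Nw_0 by simp
qed

lemma Nw_le: "real (N k) * w k \<le> (1/3)^(Suc k)"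
proof (cases k)
  case 0 then show ?thesis using Nw_0 by simp
next
  case (Suc j)
  have "w j \<le> w 0 * (1/3)^j" using w_geo[of 0 j] by simp
  also have "\<dots> \<le> 1/3 * (1/3)^j" using w0_le by (simp add: mult_right_mono)
  finally show ?thesis using Nw_Suc[of j] Suc by simp
qed

lemma dig_ex: "\<exists>i. i < N k \<and> dist x (P k ! i) < (1/2)^k"
  using cov[of k x] by (auto simp: N_def)

lemma dig_lt: "dig x k < N k" and dig_dist: "dist x (P k ! dig x k) < (1/2)^k"
  using LeastI_ex[OF dig_ex[of k x]] by (auto simp: dig_def)

lemma term_bound: "0 \<le> real (dig x k) * w k" "real (dig x k) * w k \<le> (1/3)^(Suc k)"
proof -
  show "0 \<le> real (dig x k) * w k" using w_pos[of k] by simp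
  have "real (dig x k) * w k \<le> real (N k) * w k"
    using dig_lt[of x k] w_pos[of k] by (simp add: mult_right_mono)
  then show "real (dig x k) * w k \<le> (1/3)^(Suc k)" using Nw_le[of k] by simp
qed

lemma summable_psi: "summable (\<lambda>k. real (dig x k) * w k)"
proof (rule summable_comparison_test'[where g="\<lambda>k. (1/3)^(Suc k)" and N=0])
  show "summable (\<lambda>k. (1/3::real)^(Suc k))" by (subst summable_Suc_iff) simp
  show "norm (real (dig x k) * w k) \<le> (1/3)^(Suc k)" for k using term_bound[of x k] by simp
qed

lemma psi_bounds: "0 \<le> psi x" "psi x \<le> 1"
proof -
  show "0 \<le> psi x" unfolding psi_def by (rule suminf_nonneg[OF summable_psi]) (rule term_bound)
  have s: "summable (\<lambda>k. (1/3::real)^(Suc k))" by (subst summable_Suc_iff) simp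
  have "psi x \<le> (\<Sum>k. (1/3::real)^(Suc k))"
    unfolding psi_def by (rule suminf_le[OF _ summable_psi s]) (rule term_bound)
  also have "\<dots> = 1/2"
  proof -
    have "(\<lambda>k. 1/3 * (1/3::real)^k) sums (1/3 * (1 / (1 - 1/3)))"
      by (rule sums_mult[OF geometric_sums]) simp
    then show ?thesis by (simp add: sums_iff)
  qed
  finally show "psi x \<le> 1" by simp
qed


lemma sep_aux:
  assumes j: "dig x j \<noteq> dig y j" and less: "\<And>i. i < j \<Longrightarrow> dig x i = dig y i"
  shows "\<bar>psi x - psi y\<bar> \<ge> w j / 2"
proof -
  define D where "D i = (real (dig x i) - real (dig y i)) * w i" for i
  have sD: "summable D"
    unfolding D_def left_diff_distrib using summable_psi by (rule summable_diff) (rule summable_psi)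
  have "psi x - psi y = suminf D"
    unfolding psi_def D_def left_diff_distrib by (rule suminf_diff[OF summable_psi summable_psi])
  also have "\<dots> = (\<Sum>n. D (n + j)) + (\<Sum>i<j. D i)" by (rule suminf_split_initial_segment[OF sD])
  also have "(\<Sum>i<j. D i) = 0" using less by (simp add: D_def)
  finally have e1: "psi x - psi y = (\<Sum>n. D (n + j))" by simp
  have sDj: "summable (\<lambda>n. D (n + j))" using sD by (simp add: summable_iff_shift)
  have e2: "(\<Sum>n. D (Suc n + j)) = (\<Sum>n. D (n + j)) - D j"
    using suminf_split_head[OF sDj] by simp
  have bnd: "norm (D (Suc n + j)) \<le> w j / 3 * (1/3)^n" for n
  proof -
    have "\<bar>real (dig x (Suc n + j)) - real (dig y (Suc n + j))\<bar> \<le> real (N (Suc n + j))"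
      using dig_lt[of x "Suc n + j"] dig_lt[of y "Suc n + j"] by linarith
    then have "norm (D (Suc n + j)) \<le> real (N (Suc (n + j))) * w (Suc (n + j))"
      unfolding D_def using w_pos[of "Suc (n + j)"]
      by (simp add: abs_mult)
    also have "\<dots> = w (j + n) / 3" using Nw_Suc[of "n + j"] by (simp add: add.commute)
    also have "\<dots> \<le> w j * (1/3)^n / 3" using w_geo[of j n] by simp
    finally show ?thesis by simp
  qed
  have gs: "(\<lambda>n. w j / 3 * (1/3::real)^n) sums (w j / 3 * (1 / (1 - 1/3)))"
    by (rule sums_mult[OF geometric_sums]) simp
  have "norm (\<Sum>n. D (Suc n + j)) \<le> (\<Sum>n. w j / 3 * (1/3::real)^n)"
    by (rule norm_suminf_le[OF bnd]) (use gs in \<open>simp add: sums_iff\<close>)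
  also have "\<dots> = w j / 2" using gs by (simp add: sums_iff)
  finally have tail: "\<bar>(\<Sum>n. D (n + j)) - D j\<bar> \<le> w j / 2" using e2 by simp
  have "\<bar>real (dig x j) - real (dig y j)\<bar> \<ge> 1" using j by linarith
  then have "\<bar>D j\<bar> \<ge> w j" unfolding D_def using w_pos[of j] by (simp add: abs_mult mult_le_cancel_right1)
  then show ?thesis using tail e1 by linarith
qed

lemma sep:
  assumes "dig x k \<noteq> dig y k"
  shows "\<bar>psi x - psi y\<bar> \<ge> w k / 2"
proof -
  define j where "j = (LEAST j. dig x j \<noteq> dig y j)"
  have j: "dig x j \<noteq> dig y j" unfolding j_def by (rule LeastI[of _ k]) (rule assms)
  have jk: "j \<le> k" unfolding j_def by (rule Least_le) (rule assms)
  have less: "dig x i = dig y i" if "i < j" for i using not_less_Least[of i] that unfolding j_def by blast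
  have "\<bar>psi x - psi y\<bar> \<ge> w j / 2" by (rule sep_aux[OF j less])
  moreover have "w k \<le> w j" by (rule w_mono[OF jk])
  ultimately show ?thesis by simp
qed

lemma close:
  assumes "\<bar>psi x - psi y\<bar> < w k / 2"
  shows "dist x y < 2 * (1/2)^k"
proof -
  have "dig x k = dig y k" using sep[of x k y] assms by linarith
  moreover have "dist x y \<le> dist x (P k ! dig x k) + dist y (P k ! dig x k)"
    using dist_triangle3[of x y "P k ! dig x k"] by (simp add: dist_commute)
  ultimately show ?thesis using dig_dist[of x k] dig_dist[of y k] by simp
qed

end

context net begin
lemma dig_meas: "(\<lambda>x. dig x k) \<in> measurable borel (count_space UNIV)"
  unfolding dig_def
proof (rule measurable_Least)
  fix i
  have eq: "{x \<in> space borel. i < N k \<and> dist x (P k ! i) < (1/2)^k} = (if i < N k then ball (P k ! i) ((1/2)^k) else {})"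
    by (auto simp: dist_commute)
  have "(if i < N k then ball (P k ! i) ((1/2::real)^k) else {}) \<in> sets borel"
    by (cases "i < N k") (simp_all only: if_True if_False borel_open[OF open_ball] sets.empty_sets)
  then show "(\<lambda>x. i < N k \<and> dist x (P k ! i) < (1/2)^k) \<in> measurable borel (count_space UNIV)"
    by (subst pred_def) (subst eq)
qed

lemma psi_meas: "psi \<in> borel_measurable borel"
proof (rule borel_measurable_LIMSEQ_real)
  show "(\<lambda>n. \<Sum>i<n. real (dig x i) * w i) \<longlonglongrightarrow> psi x" for x
    unfolding psi_def by (rule summable_LIMSEQ[OF summable_psi])
  have t: "(\<lambda>x. real (dig x i)) \<in> borel_measurable borel" for i
    by (rule measurable_compose[OF dig_meas borel_measurable_count_space])
  have "(\<lambda>x. real (dig x i) * w i) \<in> borel_measurable borel" for i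
    by (rule borel_measurable_times[OF t measurable_const]) simp
  then show "(\<lambda>x. \<Sum>i<n. real (dig x i) * w i) \<in> borel_measurable borel" for n
    by (rule borel_measurable_sum)
qed
end

lemma probs_measurable:
  assumes "M \<in> probs" "g \<in> measurable borel N"
  shows "g \<in> measurable M N"
  using assms measurable_cong_sets[OF probs_sets[OF assms(1)] refl, of N] by blast

lemma prokhorov_compact:
  fixes \<mu> :: "nat \<Rightarrow> 'a::metric_space measure"
  assumes cX: "compact (UNIV::'a set)" and M: "\<And>n. \<mu> n \<in> probs"
  shows "\<exists>\<sigma> \<mu>s. strict_mono \<sigma> \<and> \<mu>s \<in> probs \<and>
     (\<forall>g::'a \<Rightarrow> real. continuous_on UNIV g \<longrightarrow> (\<lambda>k. \<integral>x. g x \<partial>\<mu> (\<sigma> k)) \<longlonglongrightarrow> (\<integral>x. g x \<partial>\<mu>s))"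
proof -
  obtain P :: "nat \<Rightarrow> 'a list" where P: "\<And>k. P k \<noteq> []" "\<And>k x. \<exists>i<length (P k). dist x (P k ! i) < (1/2)^k"
    using nets_exist[OF cX] by blast
  interpret net P using P by unfold_locales auto
  define \<nu> where "\<nu> n = distr (\<mu> n) borel psi" for n
  have psiM: "psi \<in> measurable (\<mu> n) borel" for n by (rule probs_measurable[OF M psi_meas])
  have rd: "real_distribution (\<nu> n)" for n
  proof -
    interpret prob_space "\<mu> n" using M[of n] by (simp add: probs_def)
    have "prob_space (\<nu> n)" unfolding \<nu>_def by (rule prob_space_distr[OF psiM])
    then show ?thesis unfolding real_distribution_def real_distribution_axioms_def \<nu>_def by simp
  qed
  have tight: "tight \<nu>"
    unfolding tight_def
  proof (intro conjI allI impI rd)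
    fix e :: real assume "e > 0"
    have "measure (\<nu> n) {-1<..1} = 1" for n
    proof -
      interpret prob_space "\<mu> n" using M[of n] by (simp add: probs_def)
      have "psi x \<in> {-1<..1}" for x using psi_bounds[of x] by simp
      then have "psi -` {-1<..1} \<inter> space (\<mu> n) = space (\<mu> n)" by auto
      then show ?thesis unfolding \<nu>_def
        by (subst measure_distr[OF psiM]) (simp_all add: prob_space)
    qed
    then show "\<exists>a b. a < b \<and> (\<forall>n. 1 - e < Sigma_Algebra.measure (\<nu> n) {a<..b})"
      using \<open>e > 0\<close> by (intro exI[of _ "-1"] exI[of _ 1]) simp
  qed
  obtain r \<nu>s where r: "strict_mono r" and rds: "real_distribution \<nu>s"
      and wc: "weak_conv_m (\<nu> \<circ> r) \<nu>s"
    using tight_imp_convergent_subsubsequence[OF tight, of id] by (auto simp: strict_mono_def)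
  interpret s: real_distribution \<nu>s by (rule rds)
  have rd': "real_distribution ((\<nu> \<circ> r) n)" for n using rd by simp
  have wconv: "(\<lambda>n. \<integral>u. G u \<partial>\<nu> (r n)) \<longlonglongrightarrow> (\<integral>u. G u \<partial>\<nu>s)"
    if "continuous_on UNIV G" "\<And>u. \<bar>G u\<bar> \<le> B" for G :: "real \<Rightarrow> real" and B
  proof -
    have "isCont G u" for u using that(1) by (simp add: continuous_on_eq_continuous_at)
    then show ?thesis
      using weak_conv_imp_integral_bdd_continuous_conv[OF rd' rds wc, of G B] that(2) by simp
  qed
  have int_nu: "(\<integral>u. G u \<partial>\<nu> n) = (\<integral>x. G (psi x) \<partial>\<mu> n)"
    if "continuous_on UNIV G" for G :: "real \<Rightarrow> real" and n
    unfolding \<nu>_def by (rule integral_distr[OF psiM borel_measurable_continuous_onI[OF that]])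

  define K where "K = closure (range psi)"
  have Kc: "closed K" unfolding K_def by simp
  have psiK: "psi x \<in> K" for x unfolding K_def by (rule subsetD[OF closure_subset]) (rule rangeI)
  have Kne: "K \<noteq> {}" using psiK by blast
  define Rep where "Rep u x \<longleftrightarrow> (\<exists>y. (\<lambda>i. psi (y i)) \<longlonglongrightarrow> u \<and> y \<longlonglongrightarrow> x)" for u x
  have Rep_ex: "\<exists>x. Rep u x" if "u \<in> K" for u
  proof -
    have "\<exists>v. (\<forall>n. v n \<in> range psi) \<and> v \<longlonglongrightarrow> u"
      using that unfolding K_def closure_sequential .
    then obtain v where v: "\<And>n. v n \<in> range psi" "v \<longlonglongrightarrow> u" by blast
    have "\<forall>n. \<exists>z. v n = psi z" using v(1) by blast
    then have "\<exists>y. \<forall>n. v n = psi (y n)" by (rule choice)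
    then obtain y where y: "\<And>n. v n = psi (y n)" by blast
    obtain l s where s: "strict_mono s" "(y \<circ> s) \<longlonglongrightarrow> l"
      by (rule seq_compactE[OF compact_imp_seq_compact[OF cX], of y]) simp_all
    have "(v \<circ> s) \<longlonglongrightarrow> u" by (rule LIMSEQ_subseq_LIMSEQ[OF v(2) s(1)])
    moreover have "v \<circ> s = (\<lambda>i. psi ((y \<circ> s) i))" by (rule ext) (simp add: y)
    ultimately have "(\<lambda>i. psi ((y \<circ> s) i)) \<longlonglongrightarrow> u" by simp
    then show ?thesis unfolding Rep_def by (intro exI[of _ l] exI[of _ "y \<circ> s"] conjI s(2))
  qed
  have Rep_mod: "dist x x' \<le> 2 * (1/2)^k" if R1: "Rep u x" and R2: "Rep u' x'" and R3: "\<bar>u - u'\<bar> < w k / 2" for u u' x x' k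
  proof -
    obtain y where y: "(\<lambda>i. psi (y i)) \<longlonglongrightarrow> u" "y \<longlonglongrightarrow> x" using R1 unfolding Rep_def by blast
    obtain y' where y': "(\<lambda>i. psi (y' i)) \<longlonglongrightarrow> u'" "y' \<longlonglongrightarrow> x'" using R2 unfolding Rep_def by blast
    have t1: "(\<lambda>i. psi (y i) - psi (y' i)) \<longlonglongrightarrow> u - u'" by (rule tendsto_diff[OF y(1) y'(1)])
    have t2: "(\<lambda>i. \<bar>psi (y i) - psi (y' i)\<bar>) \<longlonglongrightarrow> \<bar>u - u'\<bar>" by (rule tendsto_rabs[OF t1])
    have "eventually (\<lambda>i. \<bar>psi (y i) - psi (y' i)\<bar> < w k / 2) sequentially"
      by (rule order_tendstoD(2)[OF t2 R3])
    then have ev: "eventually (\<lambda>i. dist (y i) (y' i) \<le> 2 * (1/2)^k) sequentially"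
    proof (rule eventually_mono)
      fix i assume "\<bar>psi (y i) - psi (y' i)\<bar> < w k / 2"
      then have "dist (y i) (y' i) < 2 * (1/2)^k" by (rule close)
      then show "dist (y i) (y' i) \<le> 2 * (1/2)^k" by (rule less_imp_le)
    qed
    have "(\<lambda>i. dist (y i) (y' i)) \<longlonglongrightarrow> dist x x'" by (rule tendsto_dist[OF y(2) y'(2)])
    then show ?thesis using ev unfolding eventually_sequentially by (rule LIMSEQ_le_const2)
  qed
  have small: "\<exists>k. 2 * (1/2::real)^k < e" if ep: "e > 0" for e
  proof -
    obtain n where "(1/2::real)^n < e/2" using real_arch_pow_inv[of "e/2" "1/2::real"] ep by auto
    then have "2 * (1/2::real)^n < e" by simp
    then show ?thesis by blast
  qed
  define Phi where "Phi u = (SOME x. Rep u x)" for u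
  have Phi_rep: "Rep u (Phi u)" if "u \<in> K" for u
    unfolding Phi_def using Rep_ex[OF that] by (rule someI_ex)
  have Phi_psi: "Phi (psi x) = x" for x
  proof -
    have r1: "Rep (psi x) x" unfolding Rep_def by (intro exI[of _ "\<lambda>_. x"]) simp
    have "dist (Phi (psi x)) x \<le> 2 * (1/2)^k" for k
      by (rule Rep_mod[OF Phi_rep[OF psiK] r1]) (use w_pos[of k] in simp)
    then have "\<not> dist (Phi (psi x)) x > 0" using small by (meson not_le)
    then show ?thesis by simp
  qed
  have Phi_cont: "continuous_on K Phi"
  proof (rule continuous_on_iff[THEN iffD2], intro ballI allI impI)
    fix u e assume u: "u \<in> K" and e: "(e::real) > 0"
    obtain k where k: "2 * (1/2::real)^k < e" using small[OF e] by blast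
    show "\<exists>d>0. \<forall>u'\<in>K. dist u' u < d \<longrightarrow> dist (Phi u') (Phi u) < e"
    proof (intro exI[of _ "w k / 2"] conjI ballI impI)
      show "w k / 2 > 0" using w_pos[of k] by simp
      fix u' assume "u' \<in> K" "dist u' u < w k / 2"
      then have "dist (Phi u') (Phi u) \<le> 2 * (1/2)^k"
        using Rep_mod[OF Phi_rep Phi_rep[OF u]] by (simp add: dist_real_def)
      then show "dist (Phi u') (Phi u) < e" using k by simp
    qed
  qed
  \<comment> \<open>the limit is concentrated on K\<close>
  define h where "h u = max 0 (1 - infdist u K)" for u
  have hc: "continuous_on UNIV h" unfolding h_def by (intro continuous_intros)
  have hb: "\<bar>h u\<bar> \<le> 1" for u unfolding h_def using infdist_nonneg[of u K] by auto
  have h1: "h (psi x) = 1" for x unfolding h_def using psiK[of x] by simp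
  have "(\<integral>u. h u \<partial>\<nu> (r n)) = 1" for n
    unfolding int_nu[OF hc] h1 by (rule probs_const[OF M])
  then have "(\<lambda>n. 1::real) \<longlonglongrightarrow> (\<integral>u. h u \<partial>\<nu>s)" using wconv[OF hc hb] by simp
  then have hint: "(\<integral>u. h u \<partial>\<nu>s) = 1" using LIMSEQ_unique tendsto_const by blast
  have AEK: "AE u in \<nu>s. u \<in> K"
  proof -
    have hm: "h \<in> borel_measurable \<nu>s" using borel_measurable_continuous_onI[OF hc] by simp
    have ih: "integrable \<nu>s h"
      by (rule s.integrable_const_bound[where B=1]) (use hb hm in auto)
    have sp: "space \<nu>s = UNIV" using sets_eq_imp_space_eq[OF s.events_eq_borel] by simp
    have "(\<integral>u. 1 - h u \<partial>\<nu>s) = 0" using hint ih s.prob_space sp by simp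
    then have "AE u in \<nu>s. 1 - h u = 0"
      by (subst integral_nonneg_eq_0_iff_AE[symmetric]) (use ih hb in \<open>auto simp: abs_le_iff\<close>)
    then show ?thesis
    proof (rule AE_mp, intro AE_I2 impI)
      fix u assume "1 - h u = 0"
      then have "infdist u K \<le> 0" by (simp add: h_def max_def split: if_splits)
      then have "infdist u K = 0" using infdist_nonneg[of u K] by simp
      then show "u \<in> K" using in_closed_iff_infdist_zero[OF Kc Kne] by simp
    qed
  qed
  define x0 where "x0 = Phi (psi undefined)"
  define Phi' where "Phi' u = (if u \<in> K then Phi u else x0)" for u
  have Phi'm: "Phi' \<in> borel_measurable borel"
    unfolding Phi'_def
    by (rule borel_measurable_continuous_on_if[OF _ Phi_cont continuous_on_const]) (use Kc in simp)
  have Phi'm2: "Phi' \<in> measurable \<nu>s borel" using Phi'm by simp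
  define \<mu>s where "\<mu>s = distr \<nu>s borel Phi'"
  have mus: "\<mu>s \<in> probs"
    unfolding probs_def \<mu>s_def using s.prob_space_distr[OF Phi'm2] by simp
  have conv: "(\<lambda>k. \<integral>x. g x \<partial>\<mu> (r k)) \<longlonglongrightarrow> (\<integral>x. g x \<partial>\<mu>s)" if g: "continuous_on UNIV g" for g :: "'a \<Rightarrow> real"
  proof -
    obtain B0 where B0: "\<And>x. \<bar>g x\<bar> \<le> B0" using cont_bounded[OF cX g] by blast
    define B where "B = max B0 0"
    have B: "\<And>x. \<bar>g x\<bar> \<le> B" "B \<ge> 0"
      unfolding B_def using B0 by (simp_all add: le_max_iff_disj)
    have gP: "continuous_on K (\<lambda>u. g (Phi u))"
      by (rule continuous_on_compose2[OF g Phi_cont]) auto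
    have cl: "closedin (top_of_set UNIV) K" using closedin_closed_eq[OF closed_UNIV] Kc by simp
    have bd: "norm (g (Phi u)) \<le> B" if "u \<in> K" for u using B(1) by simp
    obtain G where G: "continuous_on UNIV G" "\<And>u. u \<in> K \<Longrightarrow> G u = g (Phi u)" "\<And>u. u \<in> UNIV \<Longrightarrow> norm (G u) \<le> B"
      using Tietze[OF gP cl B(2) bd] by blast
    have gm: "g \<in> borel_measurable borel" by (rule borel_measurable_continuous_onI[OF g])
    have "(\<integral>x. g x \<partial>\<mu>s) = (\<integral>u. g (Phi' u) \<partial>\<nu>s)"
      unfolding \<mu>s_def by (rule integral_distr[OF Phi'm2 gm])
    also have "\<dots> = (\<integral>u. G u \<partial>\<nu>s)"
    proof (rule integral_cong_AE)
      show "(\<lambda>u. g (Phi' u)) \<in> borel_measurable \<nu>s" using gm Phi'm by simp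
      show "G \<in> borel_measurable \<nu>s" using borel_measurable_continuous_onI[OF G(1)] by simp
      show "AE u in \<nu>s. g (Phi' u) = G u" using AEK by eventually_elim (simp add: Phi'_def G(2))
    qed
    finally have e1: "(\<integral>x. g x \<partial>\<mu>s) = (\<integral>u. G u \<partial>\<nu>s)" .
    have e2: "(\<integral>u. G u \<partial>\<nu> (r n)) = (\<integral>x. g x \<partial>\<mu> (r n))" for n
      unfolding int_nu[OF G(1)] using G(2)[OF psiK] Phi_psi by simp
    show ?thesis using wconv[OF G(1), of B] G(3) unfolding e1 e2 by simp
  qed
  show ?thesis using r mus conv by blast
qed

locale setting =
  fixes \<tau> :: "'l::metric_space \<Rightarrow> 'x::metric_space \<Rightarrow> 'x"
    and q :: "nat \<Rightarrow> 'x \<Rightarrow> 'l measure"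
    and qs :: "'x \<Rightarrow> 'l measure"
    and \<mu> :: "nat \<Rightarrow> 'x measure"
    and s r t :: real
  assumes cX: "compact (UNIV :: 'x set)"
    and cL: "compact (UNIV :: 'l set)"
    and tau_cont: "continuous_on UNIV (\<lambda>(l, x). \<tau> l x)"
    and q_prob: "\<And>n x. q n x \<in> probs"
    and s_pos: "s > 0" and r_nn: "r \<ge> 0" and t_nn: "t \<ge> 0" and srt: "s + r * t < 1"
    and M1: "\<And>n x y f. lip1 f \<Longrightarrow>
               (\<integral>l. \<bar>f (\<tau> l x) - f (\<tau> l y)\<bar> \<partial>(q n x)) \<le> s * dist x y"
    and H2: "\<And>l1 l2 x. dist (\<tau> l1 x) (\<tau> l2 x) \<le> r * dist l1 l2"
    and H3: "\<And>n x y. dMK (q n x) (q n y) \<le> t * dist x y"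
    and mu_inv: "\<And>n. invariant \<tau> (q n) (\<mu> n)"
    and qs_prob: "\<And>x. qs x \<in> probs"
    and unif: "\<And>\<epsilon>. \<epsilon> > 0 \<Longrightarrow> \<exists>N. \<forall>n\<ge>N. \<forall>x. dMK (q n x) (qs x) < \<epsilon>"
begin

definition c where "c = s + r * t"
lemma c_pos: "c > 0" and c_lt: "c < 1"
  using s_pos mult_nonneg_nonneg[OF r_nn t_nn] srt by (auto simp: c_def)

abbreviation Bn where "Bn n f \<equiv> transfer \<tau> (q n) f"
abbreviation Bs where "Bs f \<equiv> transfer \<tau> qs f"

lemma tau_cont_l: "continuous_on UNIV (\<lambda>l. \<tau> l x)"
proof -
  have "continuous_on UNIV (\<lambda>l. (l, x))" by (intro continuous_intros)
  then show ?thesis using continuous_on_compose2[OF tau_cont, of UNIV "\<lambda>l. (l, x)"] by simp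
qed

lemma comp_cont: "continuous_on UNIV f \<Longrightarrow> continuous_on UNIV (\<lambda>l. f (\<tau> l x))"
  using continuous_on_compose2[OF _ tau_cont_l, of UNIV f] by simp

lemma lip_tau: "lip1 f \<Longrightarrow> lipc r (\<lambda>l. f (\<tau> l x))"
  unfolding lipc_def lip1_def using H2 order_trans by blast

lemma int_q: assumes f: "continuous_on UNIV (f::'x \<Rightarrow> real)" shows "integrable (q n z) (\<lambda>l. f (\<tau> l x))"
  by (rule probs_integrable[OF cL q_prob comp_cont[OF f]])

lemma int_qs: assumes f: "continuous_on UNIV (f::'x \<Rightarrow> real)" shows "integrable (qs z) (\<lambda>l. f (\<tau> l x))"
  by (rule probs_integrable[OF cL qs_prob comp_cont[OF f]])

lemma Bconv: "lip1 f \<Longrightarrow> \<bar>Bn n f x - Bs f x\<bar> \<le> r * dMK (q n x) (qs x)"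
  unfolding transfer_def by (rule dMK_lipc[OF cL q_prob qs_prob lip_tau r_nn])

lemma Bn_lip: assumes f: "lip1 f" shows "lipc c (Bn n f)"
  unfolding lipc_def
proof (intro allI)
  fix x y
  have fc: "continuous_on UNIV f" by (rule lip1_cont[OF f])
  have i1: "integrable (q n x) (\<lambda>l. f (\<tau> l x) - f (\<tau> l y))"
    using int_q[OF fc, of n x x] int_q[OF fc, of n x y] by simp
  have "\<bar>\<integral>l. f (\<tau> l x) - f (\<tau> l y) \<partial>q n x\<bar> \<le> (\<integral>l. \<bar>f (\<tau> l x) - f (\<tau> l y)\<bar> \<partial>q n x)"
    by (rule integral_abs_bound)
  also have "\<dots> \<le> s * dist x y" by (rule M1[OF f])
  finally have a: "\<bar>(\<integral>l. f (\<tau> l x) \<partial>q n x) - (\<integral>l. f (\<tau> l y) \<partial>q n x)\<bar> \<le> s * dist x y"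
    using int_q[OF fc, of n x x] int_q[OF fc, of n x y] by (simp add: integral_diff)
  have "\<bar>(\<integral>l. f (\<tau> l y) \<partial>q n x) - (\<integral>l. f (\<tau> l y) \<partial>q n y)\<bar> \<le> r * dMK (q n x) (q n y)"
    by (rule dMK_lipc[OF cL q_prob q_prob lip_tau[OF f] r_nn])
  also have "\<dots> \<le> r * (t * dist x y)" by (rule mult_left_mono[OF H3 r_nn])
  finally have b: "\<bar>(\<integral>l. f (\<tau> l y) \<partial>q n x) - (\<integral>l. f (\<tau> l y) \<partial>q n y)\<bar> \<le> r * t * dist x y" by simp
  have "\<bar>Bn n f x - Bn n f y\<bar> \<le> s * dist x y + r * t * dist x y"
    unfolding transfer_def using a b by linarith
  then show "\<bar>Bn n f x - Bn n f y\<bar> \<le> c * dist x y" by (simp add: c_def distrib_right)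
qed

lemma Bs_lip: assumes f: "lip1 f" shows "lipc c (Bs f)"
  unfolding lipc_def
proof (intro allI)
  fix x y
  show "\<bar>Bs f x - Bs f y\<bar> \<le> c * dist x y"
  proof (rule field_le_epsilon)
    fix e :: real assume e: "e > 0"
    define \<epsilon> where "\<epsilon> = e / (2 * r + 1)"
    have ep: "\<epsilon> > 0" using e r_nn by (simp add: \<epsilon>_def)
    obtain N where N: "\<And>x. dMK (q N x) (qs x) < \<epsilon>" using unif[OF ep] by blast
    have 1: "\<bar>Bn N f z - Bs f z\<bar> \<le> r * \<epsilon>" for z
      using Bconv[OF f, of N z] mult_left_mono[OF less_imp_le[OF N[of z]] r_nn] by linarith
    have 2: "\<bar>Bn N f x - Bn N f y\<bar> \<le> c * dist x y" using Bn_lip[OF f] by (simp add: lipc_def)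
    have "2 * r * \<epsilon> \<le> e" using e r_nn by (simp add: \<epsilon>_def field_simps)
    then show "\<bar>Bs f x - Bs f y\<bar> \<le> c * dist x y + e" using 1[of x] 1[of y] 2 by linarith
  qed
qed


lemma int_diff_bound:
  fixes g h :: "'a::metric_space \<Rightarrow> real"
  assumes M: "M \<in> probs" and g: "integrable M g" and h: "integrable M h"
    and d: "\<And>x. \<bar>g x - h x\<bar> \<le> \<delta>"
  shows "\<bar>(\<integral>x. g x \<partial>M) - (\<integral>x. h x \<partial>M)\<bar> \<le> \<delta>"
proof -
  have "(\<integral>x. g x \<partial>M) - (\<integral>x. h x \<partial>M) = (\<integral>x. g x - h x \<partial>M)"
    by (rule Bochner_Integration.integral_diff[OF g h, symmetric])
  then have "\<bar>(\<integral>x. g x \<partial>M) - (\<integral>x. h x \<partial>M)\<bar> \<le> (\<integral>x. \<bar>g x - h x\<bar> \<partial>M)"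
    using integral_abs_bound[of M "\<lambda>x. g x - h x"] by simp
  also have "\<dots> \<le> (\<integral>x. \<delta> \<partial>M)"
  proof (rule integral_mono)
    show "integrable M (\<lambda>x. \<bar>g x - h x\<bar>)" using g h by simp
    show "integrable M (\<lambda>x. \<delta>)"
    proof -
      interpret prob_space M using M by (simp add: probs_def)
      show ?thesis by simp
    qed
  qed (rule d)
  also have "\<dots> = \<delta>" by (rule probs_const[OF M])
  finally show ?thesis .
qed

lemma cmp:
  fixes P Q :: "('x \<Rightarrow> real) \<Rightarrow> 'x \<Rightarrow> real"
  assumes m1: "m1 \<in> probs" and m2: "m2 \<in> probs"
    and i1: "\<And>f. lip1 f \<Longrightarrow> (\<integral>x. f x \<partial>m1) = (\<integral>x. P f x \<partial>m1)"
    and i2: "\<And>f. lip1 f \<Longrightarrow> (\<integral>x. f x \<partial>m2) = (\<integral>x. Q f x \<partial>m2)"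
    and Pl: "\<And>f. lip1 f \<Longrightarrow> lipc c (P f)"
    and Ql: "\<And>f. lip1 f \<Longrightarrow> lipc c (Q f)"
    and d: "\<And>f x. lip1 f \<Longrightarrow> \<bar>P f x - Q f x\<bar> \<le> \<delta>"
  shows "dMK m1 m2 \<le> c * dMK m1 m2 + \<delta>"
proof (rule dMK_le)
  fix f :: "'x \<Rightarrow> real" assume f: "lip1 f"
  have ip: "integrable m2 (P f)" by (rule probs_integrable[OF cX m2 lipc_cont[OF Pl[OF f]]])
  have iq: "integrable m2 (Q f)" by (rule probs_integrable[OF cX m2 lipc_cont[OF Ql[OF f]]])
  have a: "(\<integral>x. P f x \<partial>m1) - (\<integral>x. P f x \<partial>m2) \<le> c * dMK m1 m2"
    using dMK_lipc[OF cX m1 m2 Pl[OF f]] c_pos by (simp add: abs_le_iff)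
  have b: "\<bar>(\<integral>x. P f x \<partial>m2) - (\<integral>x. Q f x \<partial>m2)\<bar> \<le> \<delta>"
    by (rule int_diff_bound[OF m2 ip iq d[OF f]])
  show "(\<integral>x. f x \<partial>m1) - (\<integral>x. f x \<partial>m2) \<le> c * dMK m1 m2 + \<delta>"
    using a b i1[OF f] i2[OF f] by linarith
qed

lemma mu_probs: "\<mu> n \<in> probs" using mu_inv by (simp add: invariant_def)

lemma mu_inv_lip: assumes f: "lip1 f" shows "(\<integral>x. f x \<partial>\<mu> n) = (\<integral>x. Bn n f x \<partial>\<mu> n)"
proof -
  have "\<forall>f. continuous_on UNIV f \<longrightarrow> (\<integral>x. f x \<partial>\<mu> n) = (\<integral>x. Bn n f x \<partial>\<mu> n)"
    using mu_inv[of n] unfolding invariant_def by blast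
  then show ?thesis using lip1_cont[OF f] by blast
qed

lemma Bn_int: "lip1 f \<Longrightarrow> M \<in> probs \<Longrightarrow> integrable M (Bn n f)"
  using probs_integrable[OF cX _ lipc_cont[OF Bn_lip]] by blast

lemma Bs_int: "lip1 f \<Longrightarrow> M \<in> probs \<Longrightarrow> integrable M (Bs f)"
  using probs_integrable[OF cX _ lipc_cont[OF Bs_lip]] by blast

lemma lip1_int: "lip1 (f::'x \<Rightarrow> real) \<Longrightarrow> M \<in> probs \<Longrightarrow> integrable M f"
  using probs_integrable[OF cX _ lip1_cont] by blast

lemma Bs_div: "Bs (\<lambda>y. g y / k) x = Bs g x / k"
  unfolding transfer_def by simp

lemma Bs_diff_bound:
  assumes f: "continuous_on UNIV f" and g: "continuous_on UNIV g" and d: "\<And>x. \<bar>f x - g x\<bar> \<le> e"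
  shows "\<bar>Bs f x - Bs g x\<bar> \<le> e"
  unfolding transfer_def by (rule int_diff_bound[OF qs_prob int_qs[OF f] int_qs[OF g] d])

lemma lipc_mono: "lipc k g \<Longrightarrow> k \<le> k' \<Longrightarrow> lipc k' g"
  unfolding lipc_def by (meson order_trans mult_right_mono zero_le_dist)


lemma exists_inv: "\<exists>\<mu>s. invariant \<tau> qs \<mu>s"
proof -
  obtain \<sigma> \<mu>s where \<sigma>: "strict_mono \<sigma>" and mus: "\<mu>s \<in> probs"
    and conv: "\<And>g::'x\<Rightarrow>real. continuous_on UNIV g \<Longrightarrow> (\<lambda>k. \<integral>x. g x \<partial>\<mu> (\<sigma> k)) \<longlonglongrightarrow> (\<integral>x. g x \<partial>\<mu>s)"
    using prokhorov_compact[where \<mu>=\<mu>, OF cX mu_probs] by blast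
  have lipinv: "(\<integral>x. f x \<partial>\<mu>s) = (\<integral>x. Bs f x \<partial>\<mu>s)" if f: "lip1 f" for f
  proof -
    have Bsc: "continuous_on UNIV (Bs f)" by (rule lipc_cont[OF Bs_lip[OF f]])
    have A: "(\<lambda>k. (\<integral>x. Bn (\<sigma> k) f x \<partial>\<mu> (\<sigma> k)) - (\<integral>x. Bs f x \<partial>\<mu> (\<sigma> k))) \<longlonglongrightarrow> 0"
    proof (rule LIMSEQ_I)
      fix e :: real assume e: "e > 0"
      have ep: "e / (r + 1) > 0" using e r_nn by simp
      obtain N where N: "\<And>n x. n \<ge> N \<Longrightarrow> dMK (q n x) (qs x) < e / (r + 1)"
        using unif[OF ep] by blast
      have "norm ((\<integral>x. Bn (\<sigma> k) f x \<partial>\<mu> (\<sigma> k)) - (\<integral>x. Bs f x \<partial>\<mu> (\<sigma> k)) - 0) < e" if k: "k \<ge> N" for k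
      proof -
        have sk: "\<sigma> k \<ge> N" using seq_suble[OF \<sigma>, of k] k by simp
        have d: "\<bar>Bn (\<sigma> k) f x - Bs f x\<bar> \<le> r * (e / (r + 1))" for x
          using Bconv[OF f, of "\<sigma> k" x] mult_left_mono[OF less_imp_le[OF N[OF sk, of x]] r_nn] by linarith
        have "\<bar>(\<integral>x. Bn (\<sigma> k) f x \<partial>\<mu> (\<sigma> k)) - (\<integral>x. Bs f x \<partial>\<mu> (\<sigma> k))\<bar> \<le> r * (e / (r + 1))"
          by (rule int_diff_bound[OF mu_probs Bn_int[OF f mu_probs] Bs_int[OF f mu_probs] d])
        also have "\<dots> < e" using e r_nn by (simp add: field_simps)
        finally show ?thesis by simp
      qed
      then show "\<exists>no. \<forall>k\<ge>no. norm ((\<integral>x. Bn (\<sigma> k) f x \<partial>\<mu> (\<sigma> k)) - (\<integral>x. Bs f x \<partial>\<mu> (\<sigma> k)) - 0) < e"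
        by blast
    qed
    have B: "(\<lambda>k. \<integral>x. Bs f x \<partial>\<mu> (\<sigma> k)) \<longlonglongrightarrow> (\<integral>x. Bs f x \<partial>\<mu>s)" by (rule conv[OF Bsc])
    have "(\<lambda>k. ((\<integral>x. Bn (\<sigma> k) f x \<partial>\<mu> (\<sigma> k)) - (\<integral>x. Bs f x \<partial>\<mu> (\<sigma> k))) + (\<integral>x. Bs f x \<partial>\<mu> (\<sigma> k)))
           \<longlonglongrightarrow> 0 + (\<integral>x. Bs f x \<partial>\<mu>s)"
      by (rule tendsto_add[OF A B])
    moreover have "(\<lambda>k. ((\<integral>x. Bn (\<sigma> k) f x \<partial>\<mu> (\<sigma> k)) - (\<integral>x. Bs f x \<partial>\<mu> (\<sigma> k))) + (\<integral>x. Bs f x \<partial>\<mu> (\<sigma> k)))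
           = (\<lambda>k. \<integral>x. f x \<partial>\<mu> (\<sigma> k))"
      using mu_inv_lip[OF f] by simp
    ultimately have C1: "(\<lambda>k. \<integral>x. f x \<partial>\<mu> (\<sigma> k)) \<longlonglongrightarrow> (\<integral>x. Bs f x \<partial>\<mu>s)" by simp
    have C2: "(\<lambda>k. \<integral>x. f x \<partial>\<mu> (\<sigma> k)) \<longlonglongrightarrow> (\<integral>x. f x \<partial>\<mu>s)" by (rule conv[OF lip1_cont[OF f]])
    show ?thesis by (rule LIMSEQ_unique[OF C2 C1])
  qed
  have lipcinv: "(\<integral>x. g x \<partial>\<mu>s) = (\<integral>x. Bs g x \<partial>\<mu>s)"
    and lipc_Bs_cont: "continuous_on UNIV (Bs g)" if g: "lipc k g" and k: "k \<ge> 0" for g k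
  proof -
    have k1: "k + 1 > 0" using k by simp
    have l1: "lip1 (\<lambda>x. g x / (k + 1))" by (rule lipc_div[OF lipc_mono[OF g] k1]) simp
    have "(\<integral>x. g x / (k + 1) \<partial>\<mu>s) = (\<integral>x. Bs (\<lambda>y. g y / (k + 1)) x \<partial>\<mu>s)" by (rule lipinv[OF l1])
    then have "(\<integral>x. g x \<partial>\<mu>s) / (k + 1) = (\<integral>x. Bs g x \<partial>\<mu>s) / (k + 1)" by (simp add: Bs_div)
    then show "(\<integral>x. g x \<partial>\<mu>s) = (\<integral>x. Bs g x \<partial>\<mu>s)" using k1 by simp
    have eqB: "(\<lambda>x. (k + 1) * Bs (\<lambda>y. g y / (k + 1)) x) = Bs g" using k1 by (simp add: Bs_div)
    have "continuous_on UNIV (\<lambda>x. (k + 1) * Bs (\<lambda>y. g y / (k + 1)) x)"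
      by (intro continuous_on_mult_left lipc_cont[OF Bs_lip[OF l1]])
    then show "continuous_on UNIV (Bs g)" unfolding eqB .
  qed
  have continv: "(\<integral>x. f x \<partial>\<mu>s) = (\<integral>x. Bs f x \<partial>\<mu>s)" if f: "continuous_on UNIV f" for f :: "'x \<Rightarrow> real"
  proof -
    have "\<forall>j. \<exists>k g. k \<ge> 0 \<and> lipc k g \<and> (\<forall>x. \<bar>f x - g x\<bar> \<le> 1 / real (Suc j))"
      using lip_approx[OF cX f] by simp
    then obtain K G where KG: "\<And>j. K j \<ge> 0" "\<And>j. lipc (K j) (G j)" "\<And>j x. \<bar>f x - G j x\<bar> \<le> 1 / real (Suc j)"
      by metis
    have Gc: "continuous_on UNIV (G j)" for j by (rule lipc_cont[OF KG(2)])
    have BsG: "\<bar>Bs f x - Bs (G j) x\<bar> \<le> 1 / real (Suc j)" for j x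
      by (rule Bs_diff_bound[OF f Gc KG(3)])
    have small: "\<exists>j. 1 / real (Suc j) < e" if "e > 0" for e :: real
      using reals_Archimedean[OF that] by (simp add: inverse_eq_divide)
    have lim: "(\<lambda>j. Bs (G j) x) \<longlonglongrightarrow> Bs f x" for x
    proof (rule LIMSEQ_I)
      fix e :: real assume "e > 0"
      then obtain j0 where j0: "1 / real (Suc j0) < e" using small by blast
      have "norm (Bs (G j) x - Bs f x) < e" if "j \<ge> j0" for j
      proof -
        have "1 / real (Suc j) \<le> 1 / real (Suc j0)" using that by (simp add: frac_le)
        then show ?thesis using BsG[of x j] j0 by (simp add: abs_minus_commute)
      qed
      then show "\<exists>no. \<forall>j\<ge>no. norm (Bs (G j) x - Bs f x) < e" by blast
    qed
    have Bsm: "Bs f \<in> borel_measurable \<mu>s"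
    proof (rule borel_measurable_LIMSEQ_real[OF lim])
      show "Bs (G j) \<in> borel_measurable \<mu>s" for j
        by (rule probs_meas[OF mus lipc_Bs_cont[OF KG(2,1)]])
    qed
    obtain Bd where Bd: "\<And>x. \<bar>f x\<bar> \<le> Bd" using cont_bounded[OF cX f] by blast
    have Bsb: "\<bar>Bs f x\<bar> \<le> Bd" for x
    proof -
      have "\<bar>Bs f x - Bs (\<lambda>_. 0) x\<bar> \<le> Bd"
        by (rule Bs_diff_bound[OF f continuous_on_const]) (use Bd in simp)
      then show ?thesis by (simp add: transfer_def)
    qed
    have Bsi: "integrable \<mu>s (Bs f)"
    proof -
      interpret prob_space \<mu>s using mus by (simp add: probs_def)
      show ?thesis by (rule integrable_const_bound[where B=Bd]) (use Bsb Bsm in auto)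
    qed
    have fi: "integrable \<mu>s f" by (rule probs_integrable[OF cX mus f])
    have Gi: "integrable \<mu>s (G j)" for j by (rule probs_integrable[OF cX mus Gc])
    have BGi: "integrable \<mu>s (Bs (G j))" for j by (rule probs_integrable[OF cX mus lipc_Bs_cont[OF KG(2,1)]])
    have bnd: "\<bar>(\<integral>x. f x \<partial>\<mu>s) - (\<integral>x. Bs f x \<partial>\<mu>s)\<bar> \<le> 2 / real (Suc j)" for j
    proof -
      have 1: "\<bar>(\<integral>x. f x \<partial>\<mu>s) - (\<integral>x. G j x \<partial>\<mu>s)\<bar> \<le> 1 / real (Suc j)"
        by (rule int_diff_bound[OF mus fi Gi KG(3)])
      have 2: "\<bar>(\<integral>x. Bs f x \<partial>\<mu>s) - (\<integral>x. Bs (G j) x \<partial>\<mu>s)\<bar> \<le> 1 / real (Suc j)"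
        by (rule int_diff_bound[OF mus Bsi BGi BsG])
      have 3: "(\<integral>x. G j x \<partial>\<mu>s) = (\<integral>x. Bs (G j) x \<partial>\<mu>s)" by (rule lipcinv[OF KG(2,1)])
      show ?thesis using 1 2 3 by simp
    qed
    show ?thesis
    proof (rule ccontr)
      assume "(\<integral>x. f x \<partial>\<mu>s) \<noteq> (\<integral>x. Bs f x \<partial>\<mu>s)"
      then have "\<bar>(\<integral>x. f x \<partial>\<mu>s) - (\<integral>x. Bs f x \<partial>\<mu>s)\<bar> / 2 > 0" by simp
      then obtain j where j: "1 / real (Suc j) < \<bar>(\<integral>x. f x \<partial>\<mu>s) - (\<integral>x. Bs f x \<partial>\<mu>s)\<bar> / 2"
        using small by blast
      then show False using bnd[of j] by simp
    qed
  qed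
  have "invariant \<tau> qs \<mu>s" unfolding invariant_def using mus continv by blast
  then show ?thesis by blast
qed


lemma main_result:
  "\<exists>\<mu>s. invariant \<tau> qs \<mu>s \<and> (\<forall>\<nu>. invariant \<tau> qs \<nu> \<longrightarrow> \<nu> = \<mu>s)
             \<and> (\<lambda>n. dMK (\<mu> n) \<mu>s) \<longlonglongrightarrow> 0"
proof -
  obtain \<mu>s where inv: "invariant \<tau> qs \<mu>s" using exists_inv by blast
  have inv_gen: "m \<in> probs \<and> (\<forall>f. lip1 f \<longrightarrow> (\<integral>x. f x \<partial>m) = (\<integral>x. Bs f x \<partial>m))"
    if "invariant \<tau> qs m" for m
    using that lip1_cont unfolding invariant_def by blast
  have mus: "\<mu>s \<in> probs" and inv_lip: "\<And>f. lip1 f \<Longrightarrow> (\<integral>x. f x \<partial>\<mu>s) = (\<integral>x. Bs f x \<partial>\<mu>s)"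
    using inv_gen[OF inv] by auto
  have uniq: "\<nu> = \<mu>s" if nu: "invariant \<tau> qs \<nu>" for \<nu>
  proof -
    have nup: "\<nu> \<in> probs" and nu_lip: "\<And>f. lip1 f \<Longrightarrow> (\<integral>x. f x \<partial>\<nu>) = (\<integral>x. Bs f x \<partial>\<nu>)"
      using inv_gen[OF nu] by auto
    have d1: "dMK \<nu> \<mu>s \<le> c * dMK \<nu> \<mu>s + 0"
      by (rule cmp[OF nup mus nu_lip inv_lip Bs_lip Bs_lip]) simp_all
    have d2: "dMK \<mu>s \<nu> \<le> c * dMK \<mu>s \<nu> + 0"
      by (rule cmp[OF mus nup inv_lip nu_lip Bs_lip Bs_lip]) simp_all
    have n1: "dMK \<nu> \<mu>s \<le> 0"
    proof -
      have "(1 - c) * dMK \<nu> \<mu>s \<le> 0" using d1 by (simp add: algebra_simps)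
      then show ?thesis using c_lt by (simp add: mult_le_0_iff)
    qed
    have n2: "dMK \<mu>s \<nu> \<le> 0"
    proof -
      have "(1 - c) * dMK \<mu>s \<nu> \<le> 0" using d2 by (simp add: algebra_simps)
      then show ?thesis using c_lt by (simp add: mult_le_0_iff)
    qed
    have "(\<integral>x. f x \<partial>\<nu>) = (\<integral>x. f x \<partial>\<mu>s)" if f: "lip1 f" for f :: "'x \<Rightarrow> real"
      using dMK_ge[OF cX nup mus f] dMK_ge[OF cX mus nup f] n1 n2 by linarith
    then show ?thesis by (rule probs_eqI_lip[OF cX nup mus])
  qed
  have conv: "(\<lambda>n. dMK (\<mu> n) \<mu>s) \<longlonglongrightarrow> 0"
  proof (rule LIMSEQ_I)
    fix e :: real assume e: "e > 0"
    define \<epsilon> where "\<epsilon> = e * (1 - c) / (r + 1)"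
    have ep: "\<epsilon> > 0" using e c_lt r_nn by (simp add: \<epsilon>_def)
    obtain N where N: "\<And>n x. n \<ge> N \<Longrightarrow> dMK (q n x) (qs x) < \<epsilon>" using unif[OF ep] by blast
    have "norm (dMK (\<mu> n) \<mu>s - 0) < e" if n: "n \<ge> N" for n
    proof -
      have d: "\<bar>Bn n f x - Bs f x\<bar> \<le> r * \<epsilon>" if f: "lip1 f" for f x
        using Bconv[OF f, of n x] mult_left_mono[OF less_imp_le[OF N[OF n, of x]] r_nn] by linarith
      have D: "dMK (\<mu> n) \<mu>s \<le> c * dMK (\<mu> n) \<mu>s + r * \<epsilon>"
        by (rule cmp[OF mu_probs mus mu_inv_lip inv_lip Bn_lip Bs_lip d])
      then have "(1 - c) * dMK (\<mu> n) \<mu>s \<le> r * \<epsilon>" by (simp add: algebra_simps)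
      also have "r * \<epsilon> = (1 - c) * (r * e / (r + 1))" using r_nn c_lt by (simp add: \<epsilon>_def field_simps)
      finally have le: "(1 - c) * dMK (\<mu> n) \<mu>s \<le> (1 - c) * (r * e / (r + 1))" .
      have "dMK (\<mu> n) \<mu>s \<le> r * e / (r + 1)"
        by (rule mult_left_le_imp_le[OF le]) (use c_lt in simp)
      also have "\<dots> < e" using e r_nn by (simp add: field_simps)
      finally have "dMK (\<mu> n) \<mu>s < e" .
      moreover have "dMK (\<mu> n) \<mu>s \<ge> 0" by (rule dMK_nonneg[OF cX mu_probs mus])
      ultimately show ?thesis by simp
    qed
    then show "\<exists>no. \<forall>n\<ge>no. norm (dMK (\<mu> n) \<mu>s - 0) < e" by blast
  qed
  show ?thesis using inv uniq conv by blast
qed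

end

theorem mainTheorem2:
  fixes \<tau> :: "'l::metric_space \<Rightarrow> 'x::metric_space \<Rightarrow> 'x"
    and q :: "nat \<Rightarrow> 'x \<Rightarrow> 'l measure"
    and qs :: "'x \<Rightarrow> 'l measure"
    and \<mu> :: "nat \<Rightarrow> 'x measure"
    and s r t :: real
  assumes cX: "compact (UNIV :: 'x set)"
    and cL: "compact (UNIV :: 'l set)"
    and tau_cont: "continuous_on UNIV (\<lambda>(l, x). \<tau> l x)"
    and q_prob: "\<And>n x. q n x \<in> probs"
    and q_cont: "\<And>n. weak_continuous (q n)"
    and s_pos: "s > 0" and r_nn: "r \<ge> 0" and t_nn: "t \<ge> 0" and srt: "s + r * t < 1"
    and M1: "\<And>n x y f. lip1 f \<Longrightarrow>
               (\<integral>l. \<bar>f (\<tau> l x) - f (\<tau> l y)\<bar> \<partial>(q n x)) \<le> s * dist x y"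
    and H2: "\<And>l1 l2 x. dist (\<tau> l1 x) (\<tau> l2 x) \<le> r * dist l1 l2"
    and H3: "\<And>n x y. dMK (q n x) (q n y) \<le> t * dist x y"
    and mu_inv: "\<And>n. invariant \<tau> (q n) (\<mu> n)"
    and qs_prob: "\<And>x. qs x \<in> probs"
    and unif: "\<And>\<epsilon>. \<epsilon> > 0 \<Longrightarrow> \<exists>N. \<forall>n\<ge>N. \<forall>x. dMK (q n x) (qs x) < \<epsilon>"
  shows "\<exists>\<mu>s. invariant \<tau> qs \<mu>s \<and> (\<forall>\<nu>. invariant \<tau> qs \<nu> \<longrightarrow> \<nu> = \<mu>s)
             \<and> (\<lambda>n. dMK (\<mu> n) \<mu>s) \<longlonglongrightarrow> 0"
  proof -
  show ?thesis
    by (rule setting.main_result[OF setting.intro[OF cX cL tau_cont q_prob s_pos r_nn t_nn srt M1 H2 H3 mu_inv qs_prob unif]])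
qed

end
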